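(* Let $G$ be a discrete group and let $X$ be a $G$-boundary such that the action of $G$ on $X$ is not topologically free. Then for every $x\in X$ and every $t_1,\dots,t_n\in G$, the subgroup $\bigcap_{i=1}^n t_iG_xt_i^{-1}$ is non-trivial, where $G_x$ is the stabilizer of $x$. If moreover $G$ has no non-trivial finite normal subgroup, then this intersection is infinite.
   Context: A compact Hausdorff $G$-space $X$ is a $G$-boundary if the action is minimal (every orbit dense) and strongly proximal (for every pair of Borel probability measures $\mu,\nu$ on $X$ there is a net $t_i\in G$ with $\lim t_i\mu=\lim t_i\nu$ weak* ). The action is topologically free if for every $s\in G\setminus\{e\}$ the fixed point set $\{x: sx=x\}$ has empty interior. $G_x=\{s\in G: sx=x\}$. *)

theory Defs
  imports "HOL-Probability.Probability" "HOL-Algebra.Group_Action"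
begin

definition continuous_action :: "('g, 'm) monoid_scheme \<Rightarrow> ('g \<Rightarrow> 'x::topological_space \<Rightarrow> 'x) \<Rightarrow> bool" where
  "continuous_action G \<phi> \<longleftrightarrow> group G \<and> group_action G UNIV \<phi> \<and>
     (\<forall>g \<in> carrier G. continuous_on UNIV (\<phi> g))"

definition borel_prob :: "'x::topological_space measure \<Rightarrow> bool" where
  "borel_prob \<mu> \<longleftrightarrow> prob_space \<mu> \<and> sets \<mu> = sets borel"

definition push_meas :: "('g \<Rightarrow> 'x::topological_space \<Rightarrow> 'x) \<Rightarrow> 'g \<Rightarrow> 'x measure \<Rightarrow> 'x measure" where
  "push_meas \<phi> g \<mu> = distr \<mu> borel (\<phi> g)"

definition minimal_action :: "('g, 'm) monoid_scheme \<Rightarrow> ('g \<Rightarrow> 'x::topological_space \<Rightarrow> 'x) \<Rightarrow> bool" where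
  "minimal_action G \<phi> \<longleftrightarrow> (\<forall>x. closure (orbit G \<phi> x) = UNIV)"

text \<open>Strong proximality: for all Borel probability measures \<mu>, \<nu> there is a net (here: a proper
  filter F on G concentrated on carrier G) along which g\<mu> and g\<nu> both converge weak* to the same
  limit L (a functional on C(X)).\<close>
definition strongly_proximal :: "('g, 'm) monoid_scheme \<Rightarrow> ('g \<Rightarrow> 'x::topological_space \<Rightarrow> 'x) \<Rightarrow> bool" where
  "strongly_proximal G \<phi> \<longleftrightarrow>
     (\<forall>\<mu> \<nu>. borel_prob \<mu> \<longrightarrow> borel_prob \<nu> \<longrightarrow>
        (\<exists>F L. F \<noteq> bot \<and> eventually (\<lambda>g. g \<in> carrier G) F \<and>
           (\<forall>f::'x \<Rightarrow> real. continuous_on UNIV f \<longrightarrow>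
              ((\<lambda>g. integral\<^sup>L (push_meas \<phi> g \<mu>) f) \<longlongrightarrow> L f) F \<and>
              ((\<lambda>g. integral\<^sup>L (push_meas \<phi> g \<nu>) f) \<longlongrightarrow> L f) F)))"

definition G_boundary :: "('g, 'm) monoid_scheme \<Rightarrow> ('g \<Rightarrow> 'x::t2_space \<Rightarrow> 'x) \<Rightarrow> bool" where
  "G_boundary G \<phi> \<longleftrightarrow> compact (UNIV :: 'x set) \<and> continuous_action G \<phi> \<and>
     minimal_action G \<phi> \<and> strongly_proximal G \<phi>"

definition topologically_free :: "('g, 'm) monoid_scheme \<Rightarrow> ('g \<Rightarrow> 'x::topological_space \<Rightarrow> 'x) \<Rightarrow> bool" where
  "topologically_free G \<phi> \<longleftrightarrow>
     (\<forall>s \<in> carrier G. s \<noteq> \<one>\<^bsub>G\<^esub> \<longrightarrow> interior {x. \<phi> s x = x} = {})"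

end

theory Submission
  imports Defs
begin

definition muS :: "'x::topological_space set \<Rightarrow> 'x measure" where
  "muS S = distr (measure_pmf (pmf_of_set S)) borel id"

lemma muS_prob: "finite S \<Longrightarrow> S \<noteq> {} \<Longrightarrow> borel_prob (muS S)"
  unfolding borel_prob_def muS_def
  by (auto intro!: prob_space.prob_space_distr prob_space_measure_pmf)

lemma muS_int:
  fixes f :: "'x::topological_space \<Rightarrow> real" and \<phi> :: "'g \<Rightarrow> 'x \<Rightarrow> 'x"
  assumes "finite S" "S \<noteq> {}" "continuous_on UNIV f" "continuous_on UNIV (\<phi> g)"
  shows "integral\<^sup>L (push_meas \<phi> g (muS S)) f = (\<Sum>y\<in>S. f (\<phi> g y)) / card S"
proof -
  have hm: "\<phi> g \<in> borel_measurable borel" using assms(4) borel_measurable_continuous_onI by blast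
  have fm: "f \<in> borel_measurable borel" using assms(3) borel_measurable_continuous_onI by blast
  have "integral\<^sup>L (push_meas \<phi> g (muS S)) f = integral\<^sup>L (muS S) (\<lambda>x. f (\<phi> g x))"
    unfolding push_meas_def muS_def
    by (subst integral_distr) (auto simp: hm fm)
  also have "\<dots> = integral\<^sup>L (measure_pmf (pmf_of_set S)) (\<lambda>x. f (\<phi> g x))"
    unfolding muS_def
    by (subst integral_distr) (auto intro!: borel_measurable_continuous_onI continuous_on_compose2[OF assms(3) assms(4)])
  also have "\<dots> = (\<Sum>y\<in>S. f (\<phi> g y)) / card S"
    using assms by (simp add: integral_pmf_of_set)
  finally show ?thesis .
qed

lemma Hausdorff_t2: "Hausdorff_space (euclidean :: 'x::t2_space topology)"
  unfolding Hausdorff_space_def disjnt_def using hausdorff by auto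

lemma urysohn_point:
  fixes w :: "'x::t2_space"
  assumes "compact (UNIV::'x set)" "open V" "w \<in> V"
  obtains f :: "'x \<Rightarrow> real" where "continuous_on UNIV f" "f w = 1" "\<And>y. y \<notin> V \<Longrightarrow> f y = 0" "\<And>y. 0 \<le> f y \<and> f y \<le> 1"
proof -
  have ns: "normal_space (euclidean :: 'x topology)"
    apply (rule compact_Hausdorff_or_regular_imp_normal_space)
    using assms(1) Hausdorff_t2 by (auto simp: compact_space_def)
  have c1: "closedin euclidean (- V)" using assms by auto
  have c2: "closedin euclidean {w}" by auto
  have d: "disjnt (- V) {w}" using assms by auto
  obtain f where f: "continuous_map euclidean (top_of_set {0..1::real}) f" "f ` (- V) \<subseteq> {0}" "f ` {w} \<subseteq> {1}"
    using Urysohn_lemma[OF ns c1 c2 d, of 0 1] by auto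
  show ?thesis
  proof
    show "continuous_on UNIV f" using f(1) by (simp add: continuous_map_in_subtopology)
    show "f w = 1" using f by auto
    show "\<And>y. y \<notin> V \<Longrightarrow> f y = 0" using f by auto
    show "\<And>y. 0 \<le> f y \<and> f y \<le> 1" using f(1) by (auto simp: continuous_map_in_subtopology)
  qed
qed

lemma move_into:
  fixes \<phi> :: "'g \<Rightarrow> 'x::t2_space \<Rightarrow> 'x"
  assumes B: "G_boundary G \<phi>" and U: "open U" "U \<noteq> {}" and S: "finite S" "S \<noteq> {}"
  shows "\<exists>g\<in>carrier G. \<forall>y\<in>S. \<phi> g y \<in> U"
proof -
  have cpt: "compact (UNIV::'x set)" and ca: "continuous_action G \<phi>"
    and mn: "minimal_action G \<phi>" and sp: "strongly_proximal G \<phi>"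
    using B by (auto simp: G_boundary_def)
  have ga: "group_action G UNIV \<phi>" and cont: "\<And>g. g \<in> carrier G \<Longrightarrow> continuous_on UNIV (\<phi> g)"
    using ca by (auto simp: continuous_action_def)
  obtain z where "z \<in> S" using S by auto
  have "borel_prob (muS S)" "borel_prob (muS {z})" using muS_prob[OF S] muS_prob[of "{z}"] by auto
  then obtain F L where F: "F \<noteq> bot" and evG: "eventually (\<lambda>g. g \<in> carrier G) F"
    and conv: "\<forall>f::'x\<Rightarrow>real. continuous_on UNIV f \<longrightarrow>
       ((\<lambda>g. integral\<^sup>L (push_meas \<phi> g (muS S)) f) \<longlongrightarrow> L f) F \<and>
       ((\<lambda>g. integral\<^sup>L (push_meas \<phi> g (muS {z})) f) \<longlongrightarrow> L f) F"
    using sp unfolding strongly_proximal_def by metis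
  have convS: "((\<lambda>g. (\<Sum>y\<in>S. f (\<phi> g y)) / card S) \<longlongrightarrow> L f) F" if fc: "continuous_on UNIV f" for f :: "'x \<Rightarrow> real"
  proof -
    have "\<forall>\<^sub>F g in F. integral\<^sup>L (push_meas \<phi> g (muS S)) f = (\<Sum>y\<in>S. f (\<phi> g y)) / card S"
      using evG by eventually_elim (simp add: muS_int[OF S fc] cont)
    moreover have "((\<lambda>g. integral\<^sup>L (push_meas \<phi> g (muS S)) f) \<longlongrightarrow> L f) F"
      using conv[rule_format, OF fc] by (rule conjunct1)
    ultimately show ?thesis by (rule tendsto_cong[THEN iffD1])
  qed
  have convz: "((\<lambda>g. f (\<phi> g z)) \<longlongrightarrow> L f) F" if fc: "continuous_on UNIV f" for f :: "'x \<Rightarrow> real"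
  proof -
    have "\<forall>\<^sub>F g in F. integral\<^sup>L (push_meas \<phi> g (muS {z})) f = f (\<phi> g z)"
      using evG by eventually_elim (simp add: muS_int[of "{z}", OF _ _ fc] cont)
    moreover have "((\<lambda>g. integral\<^sup>L (push_meas \<phi> g (muS {z})) f) \<longlongrightarrow> L f) F"
      using conv[rule_format, OF fc] by (rule conjunct2)
    ultimately show ?thesis by (rule tendsto_cong[THEN iffD1])
  qed
  define Fz where "Fz = filtermap (\<lambda>g. \<phi> g z) F"
  have "Fz \<noteq> bot" using F by (simp add: Fz_def filtermap_bot_iff)
  then obtain w where w: "inf (nhds w) Fz \<noteq> bot"
    using cpt unfolding compact_filter by auto
  have Lw: "L f = f w" if fc: "continuous_on UNIV f" for f :: "'x \<Rightarrow> real"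
  proof -
    have "(f \<longlongrightarrow> L f) Fz" using convz[OF fc] by (simp add: Fz_def filterlim_filtermap)
    hence 1: "(f \<longlongrightarrow> L f) (inf (nhds w) Fz)" by (rule tendsto_mono[rotated]) simp
    have "isCont f w" using fc by (simp add: continuous_on_eq_continuous_at)
    hence "(f \<longlongrightarrow> f w) (nhds w)" by (simp add: isCont_def tendsto_at_iff_tendsto_nhds)
    hence 2: "(f \<longlongrightarrow> f w) (inf (nhds w) Fz)" by (rule tendsto_mono[rotated]) simp
    show ?thesis using tendsto_unique[OF w 1 2] .
  qed
  have "U \<inter> orbit G \<phi> w \<noteq> {}"
    using mn U open_Int_closure_eq_empty[of U "orbit G \<phi> w"] unfolding minimal_action_def by auto
  then obtain h where h: "h \<in> carrier G" "\<phi> h w \<in> U" unfolding orbit_def by auto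
  define V where "V = \<phi> h -` U"
  have V: "open V" "w \<in> V" using h U cont[OF h(1)] open_vimage by (auto simp: V_def)
  obtain f :: "'x \<Rightarrow> real" where fc: "continuous_on UNIV f" and fw: "f w = 1"
    and f0: "\<And>y. y \<notin> V \<Longrightarrow> f y = 0" and f01: "\<And>y. 0 \<le> f y \<and> f y \<le> 1"
    using urysohn_point[OF cpt V] by blast
  have "((\<lambda>g. (\<Sum>y\<in>S. f (\<phi> g y)) / card S) \<longlongrightarrow> 1) F" using convS[OF fc] Lw[OF fc] fw by simp
  moreover have "1 - 1 / card S < (1::real)" using S by (simp add: card_gt_0_iff)
  ultimately have "\<forall>\<^sub>F g in F. 1 - 1 / card S < (\<Sum>y\<in>S. f (\<phi> g y)) / card S"
    by (rule order_tendstoD(1))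
  with evG have "\<forall>\<^sub>F g in F. g \<in> carrier G \<and> 1 - 1 / card S < (\<Sum>y\<in>S. f (\<phi> g y)) / card S"
    by (rule eventually_conj)
  then obtain g where g: "g \<in> carrier G" and gs: "1 - 1 / card S < (\<Sum>y\<in>S. f (\<phi> g y)) / card S"
    using F eventually_happens by blast
  have "\<phi> g y \<in> V" if y: "y \<in> S" for y
  proof (rule ccontr)
    assume "\<phi> g y \<notin> V"
    hence f0y: "f (\<phi> g y) = 0" by (rule f0)
    have cS: "real (card S) > 0" using S by (simp add: card_gt_0_iff)
    have "(\<Sum>y\<in>S. f (\<phi> g y)) = f (\<phi> g y) + (\<Sum>y\<in>S-{y}. f (\<phi> g y))"
      using S y by (simp add: sum.remove)
    also have "(\<Sum>y\<in>S-{y}. f (\<phi> g y)) \<le> real (card (S - {y})) * 1"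
      by (rule sum_bounded_above) (use f01 in auto)
    hence "f (\<phi> g y) + (\<Sum>y\<in>S-{y}. f (\<phi> g y)) \<le> real (card (S - {y}))" using f0y by simp
    also have "\<dots> = real (card S) - 1" using S y proof - have "card S \<ge> 1" using S y by (meson card_0_eq le_less_linear less_one) then show ?thesis using S y by (simp add: of_nat_diff) qed
    finally have "(\<Sum>y\<in>S. f (\<phi> g y)) / card S \<le> (real (card S) - 1) / card S"
      using cS by (simp add: divide_right_mono)
    also have "\<dots> = 1 - 1 / card S" using cS by (simp add: field_simps)
    finally show False using gs by simp
  qed
  hence "\<forall>y\<in>S. \<phi> (h \<otimes>\<^bsub>G\<^esub> g) y \<in> U"
    using group_action.composition_rule[OF ga _ h(1) g] by (simp add: V_def)
  moreover have "h \<otimes>\<^bsub>G\<^esub> g \<in> carrier G"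
    using ca h(1) g by (simp add: continuous_action_def group.subgroupE(4) group.subgroup_self)
  ultimately show ?thesis by blast
qed

lemma act_one: "group_action G UNIV \<phi> \<Longrightarrow> \<phi> \<one>\<^bsub>G\<^esub> y = y"
  using group_action.id_eq_one[of G UNIV \<phi>] by (metis restrict_apply' UNIV_I)

lemma act_mult: "group_action G UNIV \<phi> \<Longrightarrow> g \<in> carrier G \<Longrightarrow> h \<in> carrier G \<Longrightarrow>
   \<phi> (g \<otimes>\<^bsub>G\<^esub> h) y = \<phi> g (\<phi> h y)"
  using group_action.composition_rule[of G UNIV \<phi> y g h] by simp

lemma act_inv1: "group_action G UNIV \<phi> \<Longrightarrow> group G \<Longrightarrow> g \<in> carrier G \<Longrightarrow> \<phi> (inv\<^bsub>G\<^esub> g) (\<phi> g y) = y"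
proof -
  assume a: "group_action G UNIV \<phi>" "group G" "g \<in> carrier G"
  have "\<phi> (inv\<^bsub>G\<^esub> g) (\<phi> g y) = \<phi> (inv\<^bsub>G\<^esub> g \<otimes>\<^bsub>G\<^esub> g) y"
    using act_mult[OF a(1), of "inv\<^bsub>G\<^esub> g" g y] group.inv_closed[OF a(2,3)] a by simp
  also have "\<dots> = y" using group.l_inv[OF a(2,3)] act_one[OF a(1)] by simp
  finally show ?thesis .
qed

lemma act_inv2: "group_action G UNIV \<phi> \<Longrightarrow> group G \<Longrightarrow> g \<in> carrier G \<Longrightarrow> \<phi> g (\<phi> (inv\<^bsub>G\<^esub> g) y) = y"
proof -
  assume a: "group_action G UNIV \<phi>" "group G" "g \<in> carrier G"
  have "\<phi> g (\<phi> (inv\<^bsub>G\<^esub> g) y) = \<phi> (g \<otimes>\<^bsub>G\<^esub> inv\<^bsub>G\<^esub> g) y"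
    using act_mult[OF a(1), of g "inv\<^bsub>G\<^esub> g" y] group.inv_closed[OF a(2,3)] a by simp
  also have "\<dots> = y" using group.r_inv[OF a(2,3)] act_one[OF a(1)] by simp
  finally show ?thesis .
qed

lemma conj_stab:
  assumes ga: "group_action G UNIV \<phi>" and gr: "group G" and t: "t \<in> carrier G"
  shows "(t <#\<^bsub>G\<^esub> stabilizer G \<phi> x) #>\<^bsub>G\<^esub> inv\<^bsub>G\<^esub> t = stabilizer G \<phi> (\<phi> t x)"
proof -
  interpret group G by fact
  show ?thesis
  proof (intro equalityI subsetI)
    fix k assume "k \<in> (t <#\<^bsub>G\<^esub> stabilizer G \<phi> x) #>\<^bsub>G\<^esub> inv\<^bsub>G\<^esub> t"
    then obtain h where h: "h \<in> carrier G" "\<phi> h x = x" and k: "k = t \<otimes>\<^bsub>G\<^esub> h \<otimes>\<^bsub>G\<^esub> inv\<^bsub>G\<^esub> t"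
      unfolding l_coset_def r_coset_def stabilizer_def by auto
    have kc: "k \<in> carrier G" using h t k by simp
    have "\<phi> k (\<phi> t x) = \<phi> t (\<phi> h (\<phi> (inv\<^bsub>G\<^esub> t) (\<phi> t x)))"
      using k h t by (simp add: act_mult[OF ga])
    also have "\<dots> = \<phi> t x" using act_inv1[OF ga gr t] h by simp
    finally show "k \<in> stabilizer G \<phi> (\<phi> t x)" using kc by (simp add: stabilizer_def)
  next
    fix k assume "k \<in> stabilizer G \<phi> (\<phi> t x)"
    hence kc: "k \<in> carrier G" and kf: "\<phi> k (\<phi> t x) = \<phi> t x" by (auto simp: stabilizer_def)
    define h where "h = inv\<^bsub>G\<^esub> t \<otimes>\<^bsub>G\<^esub> k \<otimes>\<^bsub>G\<^esub> t"
    have hc: "h \<in> carrier G" using kc t by (simp add: h_def)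
    have "\<phi> h x = \<phi> (inv\<^bsub>G\<^esub> t) (\<phi> k (\<phi> t x))" using kc t by (simp add: h_def act_mult[OF ga])
    also have "\<dots> = x" using kf act_inv1[OF ga gr t] by simp
    finally have hs: "h \<in> stabilizer G \<phi> x" using hc by (simp add: stabilizer_def)
    have "k = t \<otimes>\<^bsub>G\<^esub> h \<otimes>\<^bsub>G\<^esub> inv\<^bsub>G\<^esub> t" using kc t by (simp add: h_def m_assoc) (metis inv_closed m_assoc r_inv l_one)
    thus "k \<in> (t <#\<^bsub>G\<^esub> stabilizer G \<phi> x) #>\<^bsub>G\<^esub> inv\<^bsub>G\<^esub> t"
      unfolding l_coset_def r_coset_def using hs by blast
  qed
qed

definition FixS :: "('g, 'm) monoid_scheme \<Rightarrow> ('g \<Rightarrow> 'x \<Rightarrow> 'x) \<Rightarrow> 'x set \<Rightarrow> 'g set" where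
  "FixS G \<phi> Y = {k \<in> carrier G. \<forall>y\<in>Y. \<phi> k y = y}"

lemma core:
  fixes \<phi> :: "'g \<Rightarrow> 'x::t2_space \<Rightarrow> 'x"
  assumes B: "G_boundary G \<phi>" and ntf: "\<not> topologically_free G \<phi>" and Y: "finite Y"
  shows "\<exists>k\<in>FixS G \<phi> Y. k \<noteq> \<one>\<^bsub>G\<^esub>"
proof -
  have ca: "continuous_action G \<phi>" using B by (simp add: G_boundary_def)
  have ga: "group_action G UNIV \<phi>" and gr: "group G" using ca by (auto simp: continuous_action_def)
  interpret group G by fact
  obtain s where s: "s \<in> carrier G" "s \<noteq> \<one>\<^bsub>G\<^esub>" and U: "interior {x. \<phi> s x = x} \<noteq> {}"
    using ntf unfolding topologically_free_def by auto
  define U where "U = interior {x. \<phi> s x = x}"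
  have Uo: "open U" and Une: "U \<noteq> {}" and Us: "\<And>y. y \<in> U \<Longrightarrow> \<phi> s y = y"
    using U interior_subset by (auto simp: U_def)
  show ?thesis
  proof (cases "Y = {}")
    case True thus ?thesis using s by (auto simp: FixS_def)
  next
    case False
    obtain g where g: "g \<in> carrier G" and gy: "\<forall>y\<in>Y. \<phi> g y \<in> U"
      using move_into[OF B Uo Une Y False] by blast
    define k where "k = inv\<^bsub>G\<^esub> g \<otimes>\<^bsub>G\<^esub> s \<otimes>\<^bsub>G\<^esub> g"
    have kc: "k \<in> carrier G" using g s by (simp add: k_def)
    have "k \<noteq> \<one>\<^bsub>G\<^esub>"
    proof
      assume "k = \<one>\<^bsub>G\<^esub>"
      hence "g \<otimes>\<^bsub>G\<^esub> k \<otimes>\<^bsub>G\<^esub> inv\<^bsub>G\<^esub> g = \<one>\<^bsub>G\<^esub>" using g by simp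
      moreover have "g \<otimes>\<^bsub>G\<^esub> k \<otimes>\<^bsub>G\<^esub> inv\<^bsub>G\<^esub> g = s" using g s by (simp add: k_def m_assoc[symmetric]) (simp add: m_assoc)
      ultimately show False using s by simp
    qed
    moreover have "\<phi> k y = y" if y: "y \<in> Y" for y
    proof -
      have "\<phi> k y = \<phi> (inv\<^bsub>G\<^esub> g) (\<phi> s (\<phi> g y))" using g s by (simp add: k_def act_mult[OF ga])
      also have "\<dots> = \<phi> (inv\<^bsub>G\<^esub> g) (\<phi> g y)" using Us gy y by simp
      also have "\<dots> = y" using act_inv1[OF ga gr g] .
      finally show ?thesis .
    qed
    ultimately show ?thesis using kc by (auto simp: FixS_def)
  qed
qed


lemma FixS_subgroup:
  assumes ga: "group_action G UNIV \<phi>" and gr: "group G"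
  shows "subgroup (FixS G \<phi> Y) G"
proof (rule subgroup.intro)
  show "FixS G \<phi> Y \<subseteq> carrier G" by (auto simp: FixS_def)
  show "\<And>a b. a \<in> FixS G \<phi> Y \<Longrightarrow> b \<in> FixS G \<phi> Y \<Longrightarrow> a \<otimes>\<^bsub>G\<^esub> b \<in> FixS G \<phi> Y"
    by (auto simp: FixS_def act_mult[OF ga] group.subgroupE(4)[OF gr group.subgroup_self[OF gr]])
  show "\<one>\<^bsub>G\<^esub> \<in> FixS G \<phi> Y" by (auto simp: FixS_def act_one[OF ga] monoid.one_closed[OF group.is_monoid[OF gr]])
  show "\<And>a. a \<in> FixS G \<phi> Y \<Longrightarrow> inv\<^bsub>G\<^esub> a \<in> FixS G \<phi> Y"
  proof -
    fix a assume a: "a \<in> FixS G \<phi> Y"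
    hence ac: "a \<in> carrier G" and af: "\<forall>y\<in>Y. \<phi> a y = y" by (auto simp: FixS_def)
    have "\<phi> (inv\<^bsub>G\<^esub> a) y = y" if "y \<in> Y" for y
      using act_inv1[OF ga gr ac, of y] af that by simp
    thus "inv\<^bsub>G\<^esub> a \<in> FixS G \<phi> Y" using ac group.inv_closed[OF gr] by (auto simp: FixS_def)
  qed
qed

lemma FixS_anti: "Y \<subseteq> Y' \<Longrightarrow> FixS G \<phi> Y' \<subseteq> FixS G \<phi> Y"
  by (auto simp: FixS_def)

lemma infinite_part:
  fixes \<phi> :: "'g \<Rightarrow> 'x::t2_space \<Rightarrow> 'x"
  assumes B: "G_boundary G \<phi>" and ntf: "\<not> topologically_free G \<phi>"
    and nfn: "\<forall>N. N \<lhd> G \<and> finite N \<longrightarrow> N = {\<one>\<^bsub>G\<^esub>}"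
    and Y0: "finite Y0" "Y0 \<subseteq> orbit G \<phi> x"
  shows "infinite (FixS G \<phi> Y0)"
proof
  assume fin: "finite (FixS G \<phi> Y0)"
  have ca: "continuous_action G \<phi>" using B by (simp add: G_boundary_def)
  have ga: "group_action G UNIV \<phi>" and gr: "group G" using ca by (auto simp: continuous_action_def)
  define P where "P Y \<longleftrightarrow> finite Y \<and> Y0 \<subseteq> Y \<and> Y \<subseteq> orbit G \<phi> x" for Y
  have "P Y0" using Y0 by (simp add: P_def)
  then obtain Y1 where PY1: "P Y1" and mn: "\<And>Y. P Y \<Longrightarrow> card (FixS G \<phi> Y1) \<le> card (FixS G \<phi> Y)"
    using ex_has_least_nat[of P Y0 "\<lambda>Y. card (FixS G \<phi> Y)"] by blast
  define N where "N = FixS G \<phi> Y1"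
  have finN: "finite N" using fin FixS_anti[of Y0 Y1 G \<phi>] PY1 unfolding N_def P_def
    using finite_subset by blast
  have allfix: "\<phi> k y = y" if k: "k \<in> N" and y: "y \<in> orbit G \<phi> x" for k y
  proof -
    have P2: "P (insert y Y1)" using PY1 y by (auto simp: P_def)
    have sub: "FixS G \<phi> (insert y Y1) \<subseteq> N" unfolding N_def by (rule FixS_anti) auto
    have "card N \<le> card (FixS G \<phi> (insert y Y1))" using mn[OF P2] by (simp add: N_def)
    hence "card (FixS G \<phi> (insert y Y1)) = card N" using card_mono[OF finN sub] by linarith
    hence "FixS G \<phi> (insert y Y1) = N" by (rule card_subset_eq[OF finN sub])
    thus ?thesis using k by (auto simp: FixS_def)
  qed
  have "N \<lhd> G"
  proof -
    interpret group G by fact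
    show ?thesis
    proof (subst normal_inv_iff, intro conjI ballI)
      show "subgroup N G" unfolding N_def by (rule FixS_subgroup[OF ga gr])
    next
      fix g h assume g: "g \<in> carrier G" and h: "h \<in> N"
      have hc: "h \<in> carrier G" using h by (auto simp: N_def FixS_def)
      have "\<phi> (g \<otimes>\<^bsub>G\<^esub> h \<otimes>\<^bsub>G\<^esub> inv\<^bsub>G\<^esub> g) y = y" if y: "y \<in> Y1" for y
      proof -
        have yo: "y \<in> orbit G \<phi> x" using y PY1 by (auto simp: P_def)
        then obtain a where a: "a \<in> carrier G" "y = \<phi> a x" by (auto simp: orbit_def)
        have "\<phi> (inv\<^bsub>G\<^esub> g) y = \<phi> (inv\<^bsub>G\<^esub> g \<otimes>\<^bsub>G\<^esub> a) x" using a g by (simp add: act_mult[OF ga])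
        hence io: "\<phi> (inv\<^bsub>G\<^esub> g) y \<in> orbit G \<phi> x" using a g unfolding orbit_def by blast
        have "\<phi> (g \<otimes>\<^bsub>G\<^esub> h \<otimes>\<^bsub>G\<^esub> inv\<^bsub>G\<^esub> g) y = \<phi> g (\<phi> h (\<phi> (inv\<^bsub>G\<^esub> g) y))"
          using g hc by (simp add: act_mult[OF ga])
        also have "\<dots> = \<phi> g (\<phi> (inv\<^bsub>G\<^esub> g) y)" using allfix[OF h io] by simp
        also have "\<dots> = y" using act_inv2[OF ga gr g] .
        finally show ?thesis .
      qed
      thus "g \<otimes>\<^bsub>G\<^esub> h \<otimes>\<^bsub>G\<^esub> inv\<^bsub>G\<^esub> g \<in> N" using g hc by (auto simp: N_def FixS_def)
    qed
  qed
  hence "N = {\<one>\<^bsub>G\<^esub>}" using nfn finN by blast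
  moreover obtain k where "k \<in> N" "k \<noteq> \<one>\<^bsub>G\<^esub>" using core[OF B ntf, of Y1] PY1 by (auto simp: N_def P_def)
  ultimately show False by blast
qed

lemma inter_eq:
  fixes n :: nat and t :: "nat \<Rightarrow> 'g"
  assumes ga: "group_action G UNIV \<phi>" and gr: "group G" and n: "n \<ge> 1" and t: "t ` {1..n} \<subseteq> carrier G"
  shows "(\<Inter>i\<in>{1..n}. (t i <#\<^bsub>G\<^esub> stabilizer G \<phi> x) #>\<^bsub>G\<^esub> inv\<^bsub>G\<^esub> (t i)) = FixS G \<phi> ((\<lambda>i. \<phi> (t i) x) ` {1..n})"
proof -
  have "(\<Inter>i\<in>{1..n}. (t i <#\<^bsub>G\<^esub> stabilizer G \<phi> x) #>\<^bsub>G\<^esub> inv\<^bsub>G\<^esub> (t i)) = (\<Inter>i\<in>{1..n}. stabilizer G \<phi> (\<phi> (t i) x))"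
  proof (rule INF_cong[OF refl])
    fix i assume "i \<in> {1..n}"
    hence "t i \<in> carrier G" using t by auto
    thus "(t i <#\<^bsub>G\<^esub> stabilizer G \<phi> x) #>\<^bsub>G\<^esub> inv\<^bsub>G\<^esub> (t i) = stabilizer G \<phi> (\<phi> (t i) x)"
      by (rule conj_stab[OF ga gr])
  qed
  also have "\<dots> = FixS G \<phi> ((\<lambda>i. \<phi> (t i) x) ` {1..n})"
    using n by (auto simp: stabilizer_def FixS_def)
  finally show ?thesis .
qed

theorem lemma2p11:
  fixes G :: "('g, 'm) monoid_scheme" and \<phi> :: "'g \<Rightarrow> 'x::t2_space \<Rightarrow> 'x"
  assumes "G_boundary G \<phi>"
    and "\<not> topologically_free G \<phi>"
  shows "(\<forall>(x::'x) (n::nat) (t::nat \<Rightarrow> 'g). n \<ge> 1 \<longrightarrow> t ` {1..n} \<subseteq> carrier G \<longrightarrow>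
           (\<Inter>i\<in>{1..n}. (t i <#\<^bsub>G\<^esub> stabilizer G \<phi> x) #>\<^bsub>G\<^esub> inv\<^bsub>G\<^esub> (t i)) \<noteq> {\<one>\<^bsub>G\<^esub>})
       \<and> ((\<forall>N. N \<lhd> G \<and> finite N \<longrightarrow> N = {\<one>\<^bsub>G\<^esub>}) \<longrightarrow>
         (\<forall>(x::'x) (n::nat) (t::nat \<Rightarrow> 'g). n \<ge> 1 \<longrightarrow> t ` {1..n} \<subseteq> carrier G \<longrightarrow>
           infinite (\<Inter>i\<in>{1..n}. (t i <#\<^bsub>G\<^esub> stabilizer G \<phi> x) #>\<^bsub>G\<^esub> inv\<^bsub>G\<^esub> (t i))))"
proof -
  have ca: "continuous_action G \<phi>" using assms(1) by (simp add: G_boundary_def)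
  have ga: "group_action G UNIV \<phi>" and gr: "group G" using ca by (auto simp: continuous_action_def)
  show ?thesis
  proof (intro conjI allI impI)
    fix x :: 'x and n :: nat and t :: "nat \<Rightarrow> 'g"
    assume n: "n \<ge> 1" and t: "t ` {1..n} \<subseteq> carrier G"
    obtain k where "k \<in> FixS G \<phi> ((\<lambda>i. \<phi> (t i) x) ` {1..n})" "k \<noteq> \<one>\<^bsub>G\<^esub>"
      using core[OF assms, of "(\<lambda>i. \<phi> (t i) x) ` {1..n}"] by auto
    thus "(\<Inter>i\<in>{1..n}. (t i <#\<^bsub>G\<^esub> stabilizer G \<phi> x) #>\<^bsub>G\<^esub> inv\<^bsub>G\<^esub> (t i)) \<noteq> {\<one>\<^bsub>G\<^esub>}"
      using inter_eq[OF ga gr n t, of x] by auto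
  next
    fix x :: 'x and n :: nat and t :: "nat \<Rightarrow> 'g"
    assume nfn: "\<forall>N. N \<lhd> G \<and> finite N \<longrightarrow> N = {\<one>\<^bsub>G\<^esub>}" and n: "n \<ge> 1" and t: "t ` {1..n} \<subseteq> carrier G"
    have "(\<lambda>i. \<phi> (t i) x) ` {1..n} \<subseteq> orbit G \<phi> x" using t by (auto simp: orbit_def)
    hence "infinite (FixS G \<phi> ((\<lambda>i. \<phi> (t i) x) ` {1..n}))"
      using infinite_part[OF assms nfn] by auto
    thus "infinite (\<Inter>i\<in>{1..n}. (t i <#\<^bsub>G\<^esub> stabilizer G \<phi> x) #>\<^bsub>G\<^esub> inv\<^bsub>G\<^esub> (t i))"
      using inter_eq[OF ga gr n t, of x] by simp
  qed
qed

end
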